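(* Let $q>0$ and $k\in\mathbb{Z}$. A cochain $c\in C^q(\mathfrak{X}(\mathbb{R}^n))$ lies in $F^kC^q(\mathfrak{X}(\mathbb{R}^n))$ if and only if for all homogeneous polynomial vector fields $X_1,\dots,X_q\in\mathfrak{X}_{\mathrm{pol}}(\mathbb{R}^n)$ with $\sum_{i=1}^q\deg X_i<k$ we have $c(X_1,\dots,X_q)=0$.
   Context: $C^q(\mathfrak{X}(\mathbb{R}^n))$: continuous multilinear skew-symmetric maps $\mathfrak{X}(\mathbb{R}^n)^q\to\mathbb{R}$, $\mathfrak{X}(\mathbb{R}^n)$ with Fréchet topology. For $t>0$, $T_t(x)=tx$, $T_t^*X=\frac1t(X\circ T_t)$, and $(T_t^*c)(X_1,\dots,X_q)=c(T_t^*X_1,\dots,T_t^*X_q)$. $F^kC^q(\mathfrak{X}(\mathbb{R}^n))$ is the set of $c$ such that $\lim_{t\to0}t^{-k}(T_t^*c)(X_1,\dots,X_q)$ exists for all $X_i\in\mathfrak{X}(\mathbb{R}^n)$. $\mathfrak{X}_{\mathrm{pol}}(\mathbb{R}^n)$ is the space of vector fields $\sum_if_i\partial_i$ with polynomial coefficients; $X$ is homogeneous of degree $d$ if $T_t^*X=t^dX$ for all $t>0$ (equivalently its coefficients are homogeneous polynomials of degree $d+1$). *)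

theory Defs
  imports "HOL-Analysis.Analysis"
begin

definition pderiv_vf :: "'n::finite \<Rightarrow> (real^'n \<Rightarrow> real^'n) \<Rightarrow> (real^'n \<Rightarrow> real^'n)" where
  "pderiv_vf i X = (\<lambda>x. frechet_derivative X (at x) (axis i 1))"

fun Dlist :: "'n::finite list \<Rightarrow> (real^'n \<Rightarrow> real^'n) \<Rightarrow> (real^'n \<Rightarrow> real^'n)" where
  "Dlist [] X = X"
| "Dlist (i # is) X = pderiv_vf i (Dlist is X)"

definition smooth_vf :: "(real^'n::finite \<Rightarrow> real^'n) \<Rightarrow> bool" where
  "smooth_vf X \<longleftrightarrow> (\<forall>is x. Dlist is X differentiable (at x))"

text \<open>Convergence in the Fr\'echet (C^\<infinity>, compact-open) topology: every partial derivative
  converges uniformly on every compact set.\<close>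
definition vf_conv :: "(nat \<Rightarrow> real^'n::finite \<Rightarrow> real^'n) \<Rightarrow> (real^'n \<Rightarrow> real^'n) \<Rightarrow> bool" where
  "vf_conv Y X \<longleftrightarrow> (\<forall>is K. compact K \<longrightarrow>
      uniform_limit K (\<lambda>j. Dlist is (Y j)) (Dlist is X) sequentially)"

text \<open>q-cochains: a cochain takes a q-tuple (indexed by 0..<q) of vector fields.
  Continuity is sequential continuity (the Fr\'echet space is metrizable).\<close>
definition cochain :: "nat \<Rightarrow> ((nat \<Rightarrow> real^'n::finite \<Rightarrow> real^'n) \<Rightarrow> real) \<Rightarrow> bool" where
  "cochain q c \<longleftrightarrow>
     (\<forall>Xs Ys. (\<forall>i<q. Xs i = Ys i) \<longrightarrow> c Xs = c Ys)
   \<and> (\<forall>Xs i Y Z a b. (\<forall>l<q. smooth_vf (Xs l)) \<and> i < q \<and> smooth_vf Y \<and> smooth_vf Z \<longrightarrow>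
        c (Xs(i := (\<lambda>x. a *\<^sub>R Y x + b *\<^sub>R Z x))) = a * c (Xs(i := Y)) + b * c (Xs(i := Z)))
   \<and> (\<forall>Xs i j. (\<forall>l<q. smooth_vf (Xs l)) \<and> i < q \<and> j < q \<and> i \<noteq> j \<longrightarrow>
        c (Xs(i := Xs j, j := Xs i)) = - c Xs)
   \<and> (\<forall>Ys Xs. (\<forall>l<q. smooth_vf (Xs l) \<and> (\<forall>m. smooth_vf (Ys m l)) \<and> vf_conv (\<lambda>m. Ys m l) (Xs l)) \<longrightarrow>
        (\<lambda>m. c (Ys m)) \<longlonglongrightarrow> c Xs)"

definition pull_vf :: "real \<Rightarrow> (real^'n::finite \<Rightarrow> real^'n) \<Rightarrow> (real^'n \<Rightarrow> real^'n)" where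
  "pull_vf t X = (\<lambda>x. (1 / t) *\<^sub>R X (t *\<^sub>R x))"

definition pull_cochain :: "real \<Rightarrow> ((nat \<Rightarrow> real^'n::finite \<Rightarrow> real^'n) \<Rightarrow> real)
      \<Rightarrow> ((nat \<Rightarrow> real^'n \<Rightarrow> real^'n) \<Rightarrow> real)" where
  "pull_cochain t c = (\<lambda>Xs. c (\<lambda>i. pull_vf t (Xs i)))"

definition filt :: "int \<Rightarrow> nat \<Rightarrow> ((nat \<Rightarrow> real^'n::finite \<Rightarrow> real^'n) \<Rightarrow> real) \<Rightarrow> bool" where
  "filt k q c \<longleftrightarrow> cochain q c \<and>
     (\<forall>Xs. (\<forall>i<q. smooth_vf (Xs i)) \<longrightarrow>
        (\<exists>L. ((\<lambda>t. t powr (- of_int k) * pull_cochain t c Xs) \<longlongrightarrow> L) (at_right 0)))"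

definition poly_fun :: "(real^'n::finite \<Rightarrow> real) \<Rightarrow> bool" where
  "poly_fun f \<longleftrightarrow> (\<exists>A :: ('n \<Rightarrow> nat) set. \<exists>a. finite A \<and>
      f = (\<lambda>x. \<Sum>\<alpha>\<in>A. a \<alpha> * (\<Prod>i\<in>UNIV. (x $ i) ^ (\<alpha> i))))"

definition poly_vf :: "(real^'n::finite \<Rightarrow> real^'n) \<Rightarrow> bool" where
  "poly_vf X \<longleftrightarrow> (\<forall>j. poly_fun (\<lambda>x. X x $ j))"

definition homog_vf :: "int \<Rightarrow> (real^'n::finite \<Rightarrow> real^'n) \<Rightarrow> bool" where
  "homog_vf d X \<longleftrightarrow> (\<forall>t>0. pull_vf t X = (\<lambda>x. (t powr of_int d) *\<^sub>R X x))"

end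

theory Submission
  imports Defs
begin

definition pd :: "'n::finite \<Rightarrow> (real^'n \<Rightarrow> 'b::real_normed_vector) \<Rightarrow> real^'n \<Rightarrow> 'b" where
  "pd i f = (\<lambda>x. frechet_derivative f (at x) (axis i 1))"

fun gD :: "'n::finite list \<Rightarrow> (real^'n \<Rightarrow> 'b::real_normed_vector) \<Rightarrow> real^'n \<Rightarrow> 'b" where
  "gD [] f = f"
| "gD (i # is) f = pd i (gD is f)"

lemma Dlist_gD: "Dlist is X = gD is X"
  by (induction "is") (auto simp: pderiv_vf_def pd_def)

definition sm :: "(real^'n::finite \<Rightarrow> 'b::real_normed_vector) \<Rightarrow> bool" where
  "sm f \<longleftrightarrow> (\<forall>is x. gD is f differentiable (at x))"

lemma sm_diffble: "sm f \<Longrightarrow> f differentiable (at x)"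
  unfolding sm_def by (drule spec[of _ "[]"]) simp

lemma smooth_vf_sm: "smooth_vf X = sm X"
  by (simp add: smooth_vf_def sm_def Dlist_gD)

definition smn :: "nat \<Rightarrow> (real^'n::finite \<Rightarrow> 'b::real_normed_vector) \<Rightarrow> bool" where
  "smn N f \<longleftrightarrow> (\<forall>is x. length is \<le> N \<longrightarrow> gD is f differentiable (at x))"

lemma sm_smn: "sm f \<Longrightarrow> smn N f"
  by (simp add: sm_def smn_def)

lemma smn_sm: "(\<And>N. smn N f) \<Longrightarrow> sm f"
  unfolding sm_def smn_def by (meson order_refl)

lemma pd_has: "(f has_derivative L) (at x) \<Longrightarrow> pd i f x = L (axis i 1)"
  by (simp add: pd_def frechet_derivative_at[symmetric])

lemma gD_append: "gD (is @ js) f = gD is (gD js f)"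
  by (induction "is") auto

lemma pd_lin:
  assumes "bounded_linear L" "\<And>x. f differentiable (at x)"
  shows "pd i (\<lambda>x. L (f x)) = (\<lambda>x. L (pd i f x))"
proof
  fix x
  have "((\<lambda>x. L (f x)) has_derivative (\<lambda>v. L (frechet_derivative f (at x) v))) (at x)"
    using bounded_linear.has_derivative[OF assms(1) frechet_derivative_works[THEN iffD1, OF assms(2)]] .
  from pd_has[OF this, of i] show "pd i (\<lambda>x. L (f x)) x = L (pd i f x)"
    by (simp add: pd_def)
qed

lemma gD_lin:
  assumes "bounded_linear L" "smn N f" "length is \<le> Suc N"
  shows "gD is (\<lambda>x. L (f x)) = (\<lambda>x. L (gD is f x))"
  using assms(3)
proof (induction "is")
  case Nil then show ?case by simp
next
  case (Cons i "is")
  then have "gD is (\<lambda>x. L (f x)) = (\<lambda>x. L (gD is f x))" by simp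
  moreover have "\<And>x. gD is f differentiable (at x)" using assms(2) Cons.prems by (simp add: smn_def)
  ultimately show ?case by (simp add: pd_lin[OF assms(1)])
qed

lemma smn_lin:
  fixes f :: "real^'n::finite \<Rightarrow> 'b::real_normed_vector"
  assumes "bounded_linear L" "smn N f"
  shows "smn N (\<lambda>x. L (f x))"
  unfolding smn_def
proof (intro allI impI)
  fix "is" :: "'n list" and x assume "length is \<le> N"
  then have "gD is (\<lambda>x. L (f x)) = (\<lambda>x. L (gD is f x))" using gD_lin[OF assms] by simp
  moreover have "gD is f differentiable (at x)" using assms(2) \<open>length is \<le> N\<close> by (simp add: smn_def)
  ultimately show "gD is (\<lambda>x. L (f x)) differentiable (at x)"
    by (simp add: bounded_linear_imp_differentiable assms(1) differentiable_compose[of L, unfolded o_def])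
qed

lemma sm_lin: "bounded_linear L \<Longrightarrow> sm f \<Longrightarrow> sm (\<lambda>x. L (f x))"
proof -
  assume a: "bounded_linear L" "sm f"
  show ?thesis by (rule smn_sm) (rule smn_lin[OF a(1) sm_smn[OF a(2)]])
qed

lemma gD_lin_sm: "bounded_linear L \<Longrightarrow> sm f \<Longrightarrow> gD is (\<lambda>x. L (f x)) = (\<lambda>x. L (gD is f x))"
proof -
  assume a: "bounded_linear L" "sm f"
  show ?thesis by (rule gD_lin[OF a(1) sm_smn[OF a(2), of "length is"]]) simp
qed

lemma pd_add:
  assumes "\<And>x. f differentiable (at x)" "\<And>x. g differentiable (at x)"
  shows "pd i (\<lambda>x. f x + g x) = (\<lambda>x. pd i f x + pd i g x)"
proof
  fix x
  have "((\<lambda>x. f x + g x) has_derivative (\<lambda>v. frechet_derivative f (at x) v + frechet_derivative g (at x) v)) (at x)"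
    using has_derivative_add[OF frechet_derivative_works[THEN iffD1, OF assms(1)] frechet_derivative_works[THEN iffD1, OF assms(2)]] .
  from pd_has[OF this, of i] show "pd i (\<lambda>x. f x + g x) x = pd i f x + pd i g x"
    by (simp add: pd_def)
qed

lemma gD_add:
  assumes "smn N f" "smn N g" "length is \<le> Suc N"
  shows "gD is (\<lambda>x. f x + g x) = (\<lambda>x. gD is f x + gD is g x)"
  using assms(3)
proof (induction "is")
  case Nil then show ?case by simp
next
  case (Cons i "is")
  then have "gD is (\<lambda>x. f x + g x) = (\<lambda>x. gD is f x + gD is g x)" by simp
  moreover have "\<And>x. gD is f differentiable (at x)" "\<And>x. gD is g differentiable (at x)"
    using assms(1,2) Cons.prems by (auto simp: smn_def)
  ultimately show ?case by (simp add: pd_add)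
qed

lemma smn_add:
  fixes f :: "real^'n::finite \<Rightarrow> 'b::real_normed_vector"
  assumes "smn N f" "smn N g"
  shows "smn N (\<lambda>x. f x + g x)"
  unfolding smn_def
proof (intro allI impI)
  fix "is" :: "'n list" and x assume "length is \<le> N"
  then have "gD is (\<lambda>x. f x + g x) = (\<lambda>x. gD is f x + gD is g x)" using gD_add[OF assms] by simp
  moreover have "gD is f differentiable (at x)" "gD is g differentiable (at x)"
    using assms \<open>length is \<le> N\<close> by (auto simp: smn_def)
  ultimately show "gD is (\<lambda>x. f x + g x) differentiable (at x)" by simp
qed

lemma sm_add: "sm f \<Longrightarrow> sm g \<Longrightarrow> sm (\<lambda>x. f x + g x)"
proof -
  assume a: "sm f" "sm g"
  show ?thesis by (rule smn_sm) (rule smn_add[OF sm_smn[OF a(1)] sm_smn[OF a(2)]])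
qed

lemma gD_add_sm: "sm f \<Longrightarrow> sm g \<Longrightarrow> gD is (\<lambda>x. f x + g x) = (\<lambda>x. gD is f x + gD is g x)"
proof -
  assume a: "sm f" "sm g"
  show ?thesis by (rule gD_add[OF sm_smn[OF a(1), of "length is"] sm_smn[OF a(2), of "length is"]]) simp
qed

lemma sm_pd: "sm f \<Longrightarrow> sm (pd j f)"
  unfolding sm_def
proof (intro allI)
  fix "is" x assume "\<forall>is x. gD is f differentiable at x"
  then have "gD (is @ [j]) f differentiable at x" by blast
  then show "gD is (pd j f) differentiable at x" by (simp add: gD_append)
qed

lemma pd_bilin:
  assumes "bounded_bilinear bp" "\<And>x. f differentiable (at x)" "\<And>x. g differentiable (at x)"
  shows "pd i (\<lambda>x. bp (f x) (g x)) = (\<lambda>x. bp (pd i f x) (g x) + bp (f x) (pd i g x))"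
proof
  fix x
  have "((\<lambda>x. bp (f x) (g x)) has_derivative
     (\<lambda>v. bp (f x) (frechet_derivative g (at x) v) + bp (frechet_derivative f (at x) v) (g x))) (at x)"
    using bounded_bilinear.FDERIV[OF assms(1) frechet_derivative_works[THEN iffD1, OF assms(2)] frechet_derivative_works[THEN iffD1, OF assms(3)]] .
  from pd_has[OF this, of i] show "pd i (\<lambda>x. bp (f x) (g x)) x = bp (pd i f x) (g x) + bp (f x) (pd i g x)"
    by (simp add: pd_def add.commute)
qed

lemma smn_bilin:
  fixes f :: "real^'n::finite \<Rightarrow> 'a::real_normed_vector" and g :: "real^'n \<Rightarrow> 'b::real_normed_vector"
  assumes "bounded_bilinear bp"
  shows "sm f \<Longrightarrow> sm g \<Longrightarrow> smn N (\<lambda>x. bp (f x) (g x))"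
proof (induction N arbitrary: f g)
  case 0
  have "(\<lambda>x. bp (f x) (g x)) differentiable (at x)" for x
  proof -
    obtain F G where "(f has_derivative F) (at x)" "(g has_derivative G) (at x)"
      using sm_diffble[OF 0(1), of x] sm_diffble[OF 0(2), of x] unfolding differentiable_def by blast
    from bounded_bilinear.FDERIV[OF assms this] show ?thesis unfolding differentiable_def by blast
  qed
  then show ?case by (simp add: smn_def)
next
  case (Suc N)
  show ?case unfolding smn_def
  proof (intro allI impI)
    fix "is" :: "'n list" and x assume len: "length is \<le> Suc N"
    show "gD is (\<lambda>x. bp (f x) (g x)) differentiable (at x)"
    proof (cases "is" rule: rev_exhaust)
      case Nil
      then show ?thesis using Suc.IH[OF Suc.prems] unfolding smn_def
        by (metis gD.simps(1) le0 list.size(3))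
    next
      case (snoc js j)
      have df: "\<And>x. f differentiable (at x)" "\<And>x. g differentiable (at x)"
        using Suc.prems sm_diffble by blast+
      have e: "gD is (\<lambda>x. bp (f x) (g x)) = gD js (\<lambda>x. bp (pd j f x) (g x) + bp (f x) (pd j g x))"
        using snoc by (simp add: gD_append pd_bilin[OF assms df])
      have A: "smn N (\<lambda>x. bp (pd j f x) (g x))" "smn N (\<lambda>x. bp (f x) (pd j g x))"
        using Suc.IH sm_pd Suc.prems by blast+
      have lj: "length js \<le> N" using len snoc by simp
      have "gD js (\<lambda>x. bp (pd j f x) (g x) + bp (f x) (pd j g x)) =
          (\<lambda>x. gD js (\<lambda>x. bp (pd j f x) (g x)) x + gD js (\<lambda>x. bp (f x) (pd j g x)) x)"
        using gD_add[OF A] lj by simp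
      moreover have "gD js (\<lambda>x. bp (pd j f x) (g x)) differentiable (at x)"
          "gD js (\<lambda>x. bp (f x) (pd j g x)) differentiable (at x)"
        using A lj by (auto simp: smn_def)
      ultimately show ?thesis using e by simp
    qed
  qed
qed

lemma sm_bilin: "bounded_bilinear bp \<Longrightarrow> sm f \<Longrightarrow> sm g \<Longrightarrow> sm (\<lambda>x. bp (f x) (g x))"
proof -
  assume a: "bounded_bilinear bp" "sm f" "sm g"
  show ?thesis by (rule smn_sm) (rule smn_bilin[OF a])
qed

lemma pd_const: "pd i (\<lambda>x. c) = (\<lambda>x. 0)"
  by (rule ext) (simp add: pd_has[OF has_derivative_const])

lemma gD_const: "gD is (\<lambda>x. c) = (if is = [] then (\<lambda>x. c) else (\<lambda>x. 0))"
  by (induction "is") (auto simp: pd_const)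

lemma sm_const: "sm (\<lambda>x. c)"
  unfolding sm_def by (simp add: gD_const)

lemma sm_linear:
  fixes L :: "real^'n::finite \<Rightarrow> 'b::real_normed_vector"
  assumes "bounded_linear L" shows "sm L"
  unfolding sm_def
proof (intro allI)
  fix "is" :: "'n list" and x show "gD is L differentiable (at x)"
  proof (cases "is" rule: rev_exhaust)
    case Nil then show ?thesis using assms by (simp add: bounded_linear_imp_differentiable)
  next
    case (snoc js j)
    have "pd j L = (\<lambda>x. L (axis j 1))"
      by (rule ext) (simp add: pd_has[OF bounded_linear.has_derivative[OF assms has_derivative_ident]])
    then show ?thesis using snoc by (simp add: gD_append gD_const)
  qed
qed

lemma sm_scaleR: "sm f \<Longrightarrow> sm (\<lambda>x. a *\<^sub>R f x)"
  using sm_lin[OF bounded_linear_scaleR_right] .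

lemma gD_scaleR: "sm f \<Longrightarrow> gD is (\<lambda>x. a *\<^sub>R f x) = (\<lambda>x. a *\<^sub>R gD is f x)"
  using gD_lin_sm[OF bounded_linear_scaleR_right] .

lemma sm_diff: "sm f \<Longrightarrow> sm (g::_\<Rightarrow>'b::real_normed_vector) \<Longrightarrow> sm (\<lambda>x. f x - g x)"
proof -
  assume "sm f" "sm g"
  then have "sm (\<lambda>x. f x + (-1) *\<^sub>R g x)" by (intro sm_add sm_scaleR)
  then show ?thesis by simp
qed

lemma sm_sum: "finite A \<Longrightarrow> (\<And>a. a \<in> A \<Longrightarrow> sm (f a)) \<Longrightarrow> sm (\<lambda>x. \<Sum>a\<in>A. f a x)"
  by (induction A rule: finite_induct) (simp_all add: sm_add sm_const)

lemma sm_prod: "finite A \<Longrightarrow> (\<And>a. a \<in> A \<Longrightarrow> sm (f a)) \<Longrightarrow> sm (\<lambda>x. \<Prod>a\<in>A. (f a x :: real))"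
  by (induction A rule: finite_induct) (simp_all add: sm_bilin[OF bounded_bilinear_mult] sm_const)

lemma sm_power: "sm f \<Longrightarrow> sm (\<lambda>x. (f x :: real) ^ n)"
  by (induction n) (simp_all add: sm_bilin[OF bounded_bilinear_mult] sm_const)


lemma sm_gD: "sm f \<Longrightarrow> sm (gD js f)"
  unfolding sm_def
proof (intro allI)
  fix "is" x assume "\<forall>is x. gD is f differentiable at x"
  then have "gD (is @ js) f differentiable at x" by blast
  then show "gD is (gD js f) differentiable at x" by (simp add: gD_append)
qed

lemma unif_cont_box:
  fixes G :: "real \<Rightarrow> 'a::heine_borel \<Rightarrow> 'b::real_normed_vector"
  assumes cont: "continuous_on UNIV (\<lambda>p. G (fst p) (snd p))" and K: "compact K" and e: "e > 0"
  shows "\<exists>d>0. \<forall>x\<in>K. \<forall>\<sigma>. \<bar>\<sigma> - s\<bar> < d \<longrightarrow> dist (G \<sigma> x) (G s x) < e"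
proof -
  have "uniformly_continuous_on (cball s 1 \<times> K) (\<lambda>p. G (fst p) (snd p))"
    by (rule compact_uniformly_continuous[OF continuous_on_subset[OF cont]]) (auto intro: compact_Times K)
  then obtain d where d: "d > 0" and dd: "\<forall>p\<in>cball s 1 \<times> K. \<forall>p'\<in>cball s 1 \<times> K. dist p' p < d \<longrightarrow>
      dist (G (fst p') (snd p')) (G (fst p) (snd p)) < e"
    using e unfolding uniformly_continuous_on_def by metis
  show ?thesis
  proof (intro exI[of _ "min d 1"] conjI allI ballI impI)
    show "min d 1 > 0" using d by simp
    fix x \<sigma> assume x: "x \<in> K" and \<sigma>: "\<bar>\<sigma> - s\<bar> < min d 1"
    have "(\<sigma>, x) \<in> cball s 1 \<times> K" "(s, x) \<in> cball s 1 \<times> K" using x \<sigma> by (auto simp: dist_real_def)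
    moreover have "dist (\<sigma>, x) (s, x) < d" using \<sigma> by (simp add: dist_Pair_Pair dist_real_def)
    ultimately show "dist (G \<sigma> x) (G s x) < e" using dd by fastforce
  qed
qed

lemma UC:
  fixes G :: "real \<Rightarrow> 'a::heine_borel \<Rightarrow> 'b::real_normed_vector"
  assumes cont: "continuous_on UNIV (\<lambda>p. G (fst p) (snd p))" and K: "compact K" and h: "h \<longlonglongrightarrow> 0"
  shows "uniform_limit K (\<lambda>m x. G (s + h m) x) (\<lambda>x. G s x) sequentially"
  unfolding uniform_limit_sequentially_iff
proof (intro allI impI)
  fix e :: real assume e: "e > 0"
  obtain d where d: "d > 0" and dd: "\<forall>x\<in>K. \<forall>\<sigma>. \<bar>\<sigma> - s\<bar> < d \<longrightarrow> dist (G \<sigma> x) (G s x) < e"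
    using unif_cont_box[OF cont K e] by blast
  obtain N where N: "\<forall>n\<ge>N. \<bar>h n\<bar> < d" using h d unfolding LIMSEQ_def dist_real_def by auto
  show "\<exists>N. \<forall>n\<ge>N. \<forall>x\<in>K. dist (G (s + h n) x) (G s x) < e"
    using N dd by (intro exI[of _ N]) auto
qed

lemma DQ:
  fixes G :: "real \<Rightarrow> 'a::heine_borel \<Rightarrow> 'b::real_normed_vector"
  assumes der: "\<And>s x. ((\<lambda>s. G s x) has_vector_derivative G' s x) (at s)"
    and cont: "continuous_on UNIV (\<lambda>p. G' (fst p) (snd p))" and K: "compact K" and h: "h \<longlonglongrightarrow> 0"
    and hnz: "\<And>m. h m \<noteq> 0"
  shows "uniform_limit K (\<lambda>m x. (1 / h m) *\<^sub>R G (s + h m) x + (- 1 / h m) *\<^sub>R G s x) (\<lambda>x. G' s x) sequentially"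
  unfolding uniform_limit_sequentially_iff
proof (intro allI impI)
  fix e :: real assume e: "e > 0"
  have e2: "e/2 > 0" using e by simp
  obtain d where d: "d > 0" and dd: "\<forall>x\<in>K. \<forall>\<sigma>. \<bar>\<sigma> - s\<bar> < d \<longrightarrow> dist (G' \<sigma> x) (G' s x) < e/2"
    using unif_cont_box[OF cont K e2, of s] by blast
  obtain N where N: "\<forall>n\<ge>N. \<bar>h n\<bar> < d" using h d unfolding LIMSEQ_def dist_real_def by auto
  have main: "norm (G (s + t) x - G s x - t *\<^sub>R G' s x) \<le> e/2 * \<bar>t\<bar>" if x: "x \<in> K" and t: "\<bar>t\<bar> < d" for x t
  proof -
    let ?f = "\<lambda>\<sigma>. G \<sigma> x - \<sigma> *\<^sub>R G' s x"
    let ?S = "closed_segment s (s + t)"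
    have "norm (?f (s + t) - ?f s) \<le> e/2 * norm ((s + t) - s)"
    proof (rule differentiable_bound[where f' = "\<lambda>\<sigma> u. u *\<^sub>R (G' \<sigma> x - G' s x)"])
      show "convex ?S" by simp
      show "s + t \<in> ?S" "s \<in> ?S" by auto
      fix \<sigma> assume \<sigma>: "\<sigma> \<in> ?S"
      have "((\<lambda>\<sigma>. G \<sigma> x) has_derivative (\<lambda>u. u *\<^sub>R G' \<sigma> x)) (at \<sigma>)"
        using der[of x \<sigma>] unfolding has_vector_derivative_def .
      moreover have "((\<lambda>\<sigma>. \<sigma> *\<^sub>R G' s x) has_derivative (\<lambda>u. u *\<^sub>R G' s x)) (at \<sigma>)"
        by (intro derivative_eq_intros) auto
      ultimately have "(?f has_derivative (\<lambda>u. u *\<^sub>R G' \<sigma> x - u *\<^sub>R G' s x)) (at \<sigma>)"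
        by (rule has_derivative_diff)
      then show "(?f has_derivative (\<lambda>u. u *\<^sub>R (G' \<sigma> x - G' s x))) (at \<sigma> within ?S)"
        by (simp add: scaleR_diff_right has_derivative_at_withinI)
      have "\<bar>\<sigma> - s\<bar> \<le> \<bar>t\<bar>" using \<sigma> by (auto simp: closed_segment_eq_real_ivl split: if_splits)
      then have "dist (G' \<sigma> x) (G' s x) < e/2" using dd x t by auto
      then show "onorm (\<lambda>u. u *\<^sub>R (G' \<sigma> x - G' s x)) \<le> e/2"
      proof (intro onorm_le)
        fix u :: real
        have "norm (G' \<sigma> x - G' s x) \<le> e/2" using \<open>dist (G' \<sigma> x) (G' s x) < e/2\<close> by (simp add: dist_norm)
        have "norm (u *\<^sub>R (G' \<sigma> x - G' s x)) = \<bar>u\<bar> * norm (G' \<sigma> x - G' s x)" by simp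
        also have "\<dots> \<le> \<bar>u\<bar> * (e/2)" by (rule mult_left_mono) (use \<open>norm (G' \<sigma> x - G' s x) \<le> e/2\<close> in auto)
        also have "\<dots> = e/2 * norm u" by simp
        finally show "norm (u *\<^sub>R (G' \<sigma> x - G' s x)) \<le> e/2 * norm u" .
      qed
    qed
    then show ?thesis by (simp add: algebra_simps)
  qed
  show "\<exists>N. \<forall>n\<ge>N. \<forall>x\<in>K. dist ((1 / h n) *\<^sub>R G (s + h n) x + (- 1 / h n) *\<^sub>R G s x) (G' s x) < e"
  proof (intro exI[of _ N] allI impI ballI)
    fix n x assume n: "n \<ge> N" and x: "x \<in> K"
    have hn: "h n \<noteq> 0" by (rule hnz)
    have "(1 / h n) *\<^sub>R G (s + h n) x + (- 1 / h n) *\<^sub>R G s x - G' s x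
        = (1 / h n) *\<^sub>R (G (s + h n) x - G s x - h n *\<^sub>R G' s x)"
      using hn by (simp add: algebra_simps divide_simps)
    then have "dist ((1 / h n) *\<^sub>R G (s + h n) x + (- 1 / h n) *\<^sub>R G s x) (G' s x)
        = norm (G (s + h n) x - G s x - h n *\<^sub>R G' s x) / \<bar>h n\<bar>"
      by (simp add: dist_norm)
    also have "\<dots> \<le> e/2 * \<bar>h n\<bar> / \<bar>h n\<bar>"
      using main[OF x] N n hn by (intro divide_right_mono) auto
    also have "\<dots> < e" using hn e by simp
    finally show "dist ((1 / h n) *\<^sub>R G (s + h n) x + (- 1 / h n) *\<^sub>R G s x) (G' s x) < e" .
  qed
qed

lemma EXP:
  fixes f :: "real^'n::finite \<Rightarrow> 'b::real_normed_vector"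
  assumes "(f has_derivative L) (at y)"
  shows "L v = (\<Sum>j\<in>UNIV. v$j *\<^sub>R pd j f y)"
proof -
  have lin: "linear L" using assms has_derivative_linear by blast
  have "v = (\<Sum>j\<in>UNIV. v$j *\<^sub>R axis j 1)"
    using basis_expansion[of v] by (simp add: scalar_mult_eq_scaleR)
  then have "L v = L (\<Sum>j\<in>UNIV. v$j *\<^sub>R axis j 1)" by simp
  also have "\<dots> = (\<Sum>j\<in>UNIV. v$j *\<^sub>R L (axis j 1))"
    by (simp add: linear_sum[OF lin] linear_scale[OF lin])
  also have "\<dots> = (\<Sum>j\<in>UNIV. v$j *\<^sub>R pd j f y)"
    by (simp add: pd_has[OF assms])
  finally show ?thesis .
qed

lemma has_derivative_pd:
  fixes f :: "real^'n::finite \<Rightarrow> 'b::real_normed_vector"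
  assumes "f differentiable (at y)"
  shows "(f has_derivative (\<lambda>v. \<Sum>j\<in>UNIV. v$j *\<^sub>R pd j f y)) (at y)"
proof -
  have d: "(f has_derivative frechet_derivative f (at y)) (at y)"
    using assms frechet_derivative_works by blast
  have "frechet_derivative f (at y) = (\<lambda>v. \<Sum>j\<in>UNIV. v$j *\<^sub>R pd j f y)"
    using EXP[OF d] by (intro ext) simp
  then show ?thesis using d by simp
qed

lemma DL:
  fixes f :: "nat \<Rightarrow> real^'n::finite \<Rightarrow> 'b::banach"
  assumes der: "\<And>m y. (f m has_derivative (\<lambda>v. \<Sum>j\<in>UNIV. v$j *\<^sub>R g j m y)) (at y)"
    and uf: "uniform_limit (cball x 1) f F sequentially"
    and ug: "\<And>j. uniform_limit (cball x 1) (g j) (Gj j) sequentially"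
  shows "(F has_derivative (\<lambda>v. \<Sum>j\<in>UNIV. v$j *\<^sub>R Gj j x)) (at x)"
proof -
  let ?S = "ball x 1"
  have nle: "\<forall>\<^sub>F n in sequentially. \<forall>y\<in>?S. \<forall>h. norm ((\<Sum>j\<in>UNIV. h$j *\<^sub>R g j n y) - (\<Sum>j\<in>UNIV. h$j *\<^sub>R Gj j y)) \<le> e * norm h"
    if e: "e > 0" for e
  proof -
    define e' where "e' = e / real CARD('n)"
    have e': "e' > 0" using e by (simp add: e'_def)
    have "\<forall>\<^sub>F n in sequentially. \<forall>j. \<forall>y\<in>cball x 1. dist (g j n y) (Gj j y) < e'"
      by (rule eventually_all_finite, rule uniform_limitD[OF ug e'])
    then show ?thesis
    proof (rule eventually_mono)
      fix n assume n: "\<forall>j. \<forall>y\<in>cball x 1. dist (g j n y) (Gj j y) < e'"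
      show "\<forall>y\<in>?S. \<forall>h. norm ((\<Sum>j\<in>UNIV. h$j *\<^sub>R g j n y) - (\<Sum>j\<in>UNIV. h$j *\<^sub>R Gj j y)) \<le> e * norm h"
      proof (intro ballI allI)
        fix y h assume y: "y \<in> ?S"
        have "norm ((\<Sum>j\<in>UNIV. h$j *\<^sub>R g j n y) - (\<Sum>j\<in>UNIV. h$j *\<^sub>R Gj j y))
            = norm (\<Sum>j\<in>UNIV. h$j *\<^sub>R (g j n y - Gj j y))"
          by (simp add: sum_subtractf scaleR_diff_right)
        also have "\<dots> \<le> (\<Sum>j\<in>UNIV. norm (h$j *\<^sub>R (g j n y - Gj j y)))" by (rule norm_sum)
        also have "\<dots> \<le> (\<Sum>j\<in>(UNIV::'n set). norm h * e')"
        proof (rule sum_mono)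
          fix j :: 'n
          have "norm (h$j *\<^sub>R (g j n y - Gj j y)) = \<bar>h$j\<bar> * norm (g j n y - Gj j y)" by simp
          also have "\<dots> \<le> norm h * e'"
          proof (rule mult_mono)
            show "\<bar>h$j\<bar> \<le> norm h" by (rule component_le_norm_cart)
            show "norm (g j n y - Gj j y) \<le> e'" using n y by (auto simp: dist_norm less_imp_le)
          qed auto
          finally show "norm (h$j *\<^sub>R (g j n y - Gj j y)) \<le> norm h * e'" .
        qed
        also have "\<dots> = e * norm h" by (simp add: e'_def)
        finally show "norm ((\<Sum>j\<in>UNIV. h$j *\<^sub>R g j n y) - (\<Sum>j\<in>UNIV. h$j *\<^sub>R Gj j y)) \<le> e * norm h" .
      qed
    qed
  qed
  have "\<exists>G. \<forall>y\<in>?S. (\<lambda>n. f n y) \<longlonglongrightarrow> G y \<and> (G has_derivative (\<lambda>v. \<Sum>j\<in>UNIV. v$j *\<^sub>R Gj j y)) (at y within ?S)"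
  proof (rule has_derivative_sequence[where f'="\<lambda>n y v. \<Sum>j\<in>UNIV. v$j *\<^sub>R g j n y"])
    show "convex ?S" by simp
    show "x \<in> ?S" by simp
    show "(\<lambda>n. f n x) \<longlonglongrightarrow> F x" using tendsto_uniform_limitI[OF uf] by simp
    fix n y assume "y \<in> ?S"
    show "(f n has_derivative (\<lambda>v. \<Sum>j\<in>UNIV. v$j *\<^sub>R g j n y)) (at y within ?S)"
      by (rule has_derivative_at_withinI[OF der])
  next
    fix e :: real assume "e > 0" then show "\<forall>\<^sub>F n in sequentially. \<forall>y\<in>?S. \<forall>h. norm ((\<Sum>j\<in>UNIV. h$j *\<^sub>R g j n y) - (\<Sum>j\<in>UNIV. h$j *\<^sub>R Gj j y)) \<le> e * norm h"
      by (rule nle)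
  qed
  then obtain G where G: "\<forall>y\<in>?S. (\<lambda>n. f n y) \<longlonglongrightarrow> G y \<and> (G has_derivative (\<lambda>v. \<Sum>j\<in>UNIV. v$j *\<^sub>R Gj j y)) (at y within ?S)"
    by (rule exE)
  have eq: "G y = F y" if y: "y \<in> ?S" for y
  proof (rule LIMSEQ_unique)
    show "(\<lambda>n. f n y) \<longlonglongrightarrow> G y" using G y by blast
    have "y \<in> cball x 1" using y by simp
    then show "(\<lambda>n. f n y) \<longlonglongrightarrow> F y" by (rule tendsto_uniform_limitI[OF uf])
  qed
  have x: "x \<in> ?S" by simp
  have "(G has_derivative (\<lambda>v. \<Sum>j\<in>UNIV. v$j *\<^sub>R Gj j x)) (at x within ?S)"
    using G x by blast
  then have "(G has_derivative (\<lambda>v. \<Sum>j\<in>UNIV. v$j *\<^sub>R Gj j x)) (at x)"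
    by (simp only: at_within_open[OF x open_ball])
  then show ?thesis
    by (rule has_derivative_transform_within_open[where s="?S", OF _ open_ball x eq])
qed

lemma sum_axis:
  fixes v :: "'n::finite \<Rightarrow> 'b::real_vector"
  shows "(\<Sum>i\<in>UNIV. (axis j 1 :: real^'n::finite) $ i *\<^sub>R v i) = v j"
proof -
  have "(\<Sum>i\<in>UNIV. (axis j 1 :: real^'n::finite) $ i *\<^sub>R v i) = (\<Sum>i\<in>UNIV. if i = j then v i else 0)"
    by (rule sum.cong) (auto simp: axis_def)
  then show ?thesis by simp
qed

definition cls :: "(real \<Rightarrow> real^'n::finite \<Rightarrow> real^'n) \<Rightarrow> ('n list \<Rightarrow> nat \<Rightarrow> real \<Rightarrow> real^'n \<Rightarrow> real^'n) \<Rightarrow> bool" where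
  "cls \<Gamma> H \<longleftrightarrow> (\<forall>s. sm (\<Gamma> s)) \<and> (\<forall>js s. gD js (\<Gamma> s) = H js 0 s)
     \<and> (\<forall>js m s x. ((\<lambda>s. H js m s x) has_vector_derivative H js (Suc m) s x) (at s))
     \<and> (\<forall>js m. continuous_on UNIV (\<lambda>p. H js m (fst p) (snd p)))"

lemma vf_conv_gD: "vf_conv Y X \<longleftrightarrow> (\<forall>is K. compact K \<longrightarrow> uniform_limit K (\<lambda>j. gD is (Y j)) (gD is X) sequentially)"
  by (simp add: vf_conv_def Dlist_gD)

lemma cls_conv:
  fixes \<Gamma> :: "real \<Rightarrow> real^'n::finite \<Rightarrow> real^'n"
  assumes "cls \<Gamma> H" "h \<longlonglongrightarrow> 0"
  shows "vf_conv (\<lambda>m. \<Gamma> (s + h m)) (\<Gamma> s)"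
  unfolding vf_conv_gD
proof (intro allI impI)
  fix "is" :: "'n list" and K :: "(real^'n) set" assume K: "compact K"
  have "uniform_limit K (\<lambda>m x. H is 0 (s + h m) x) (\<lambda>x. H is 0 s x) sequentially"
    using UC[OF _ K assms(2)] assms(1) unfolding cls_def by blast
  moreover have eq: "\<And>t. gD is (\<Gamma> t) = H is 0 t" using assms(1) unfolding cls_def by blast
  ultimately show "uniform_limit K (\<lambda>m. gD is (\<Gamma> (s + h m))) (gD is (\<Gamma> s)) sequentially"
    by (simp only: eq)
qed

lemma gD_lincomb:
  assumes "sm f" "sm g"
  shows "gD is (\<lambda>x. a *\<^sub>R f x + b *\<^sub>R g x) = (\<lambda>x. a *\<^sub>R gD is f x + b *\<^sub>R gD is g x)"
  using assms by (simp add: gD_add_sm sm_scaleR gD_scaleR)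

lemma sm_lincomb:
  assumes "sm f" "sm g"
  shows "sm (\<lambda>x. a *\<^sub>R f x + b *\<^sub>R g x)"
  using assms by (simp add: sm_add sm_scaleR)

lemma cls_dq_unif:
  assumes c: "cls \<Gamma> H" and h: "h \<longlonglongrightarrow> 0" "\<And>m. h m \<noteq> 0" and K: "compact K"
  shows "uniform_limit K (\<lambda>m. gD js (\<lambda>x. (1 / h m) *\<^sub>R \<Gamma> (s + h m) x + (- 1 / h m) *\<^sub>R \<Gamma> s x)) (H js 1 s) sequentially"
proof -
  have sm: "\<And>t. sm (\<Gamma> t)" and g: "\<And>t. gD js (\<Gamma> t) = H js 0 t"
    and d: "\<And>s x. ((\<lambda>s. H js 0 s x) has_vector_derivative H js (Suc 0) s x) (at s)"
    and ct: "continuous_on UNIV (\<lambda>p. H js (Suc 0) (fst p) (snd p))"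
    using c unfolding cls_def by blast+
  have "uniform_limit K (\<lambda>m x. (1 / h m) *\<^sub>R H js 0 (s + h m) x + (- 1 / h m) *\<^sub>R H js 0 s x) (\<lambda>x. H js (Suc 0) s x) sequentially"
    by (rule DQ[OF d ct K h])
  then show ?thesis by (simp only: gD_lincomb[OF sm sm] g One_nat_def)
qed

lemma cls_H1_deriv:
  assumes c: "cls \<Gamma> H"
  shows "(H js 1 s has_derivative (\<lambda>v. \<Sum>j\<in>UNIV. v$j *\<^sub>R H (j # js) 1 s x)) (at x)"
proof -
  define h :: "nat \<Rightarrow> real" where "h m = 1 / real (Suc m)" for m
  have "(\<lambda>m. 1 / real (Suc m)) \<longlonglongrightarrow> 0" by (rule LIMSEQ_Suc[OF lim_inverse_n'])
  then have h: "h \<longlonglongrightarrow> 0" "\<And>m. h m \<noteq> 0" unfolding h_def by auto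
  define Q where "Q m = (\<lambda>x. (1 / h m) *\<^sub>R \<Gamma> (s + h m) x + (- 1 / h m) *\<^sub>R \<Gamma> s x)" for m
  have sm: "\<And>t. sm (\<Gamma> t)" using c unfolding cls_def by blast
  have smQ: "sm (Q m)" for m unfolding Q_def by (rule sm_lincomb[OF sm sm])
  show ?thesis
  proof (rule DL[where f="\<lambda>m. gD js (Q m)" and g="\<lambda>j m. gD (j # js) (Q m)"])
    fix m y
    show "(gD js (Q m) has_derivative (\<lambda>v. \<Sum>j\<in>UNIV. v $ j *\<^sub>R gD (j # js) (Q m) y)) (at y)"
      using has_derivative_pd[OF sm_diffble[OF sm_gD[OF smQ]]] by simp
  next
    show "uniform_limit (cball x 1) (\<lambda>m. gD js (Q m)) (H js 1 s) sequentially"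
      unfolding Q_def by (rule cls_dq_unif[OF c h]) simp
  next
    fix j
    show "uniform_limit (cball x 1) (\<lambda>m. gD (j # js) (Q m)) (H (j # js) 1 s) sequentially"
      unfolding Q_def by (rule cls_dq_unif[OF c h]) simp
  qed
qed

lemma cls_next:
  assumes c: "cls \<Gamma> H"
  shows "cls (\<lambda>s x. H [] 1 s x) (\<lambda>js m. H js (Suc m))"
proof -
  have pdH: "pd j (H js 1 s) = H (j # js) 1 s" for j js s
  proof
    fix x
    have "pd j (H js 1 s) x = (\<Sum>i\<in>UNIV. (axis j 1 :: real^_) $ i *\<^sub>R H (i # js) 1 s x)"
      by (rule pd_has[OF cls_H1_deriv[OF c]])
    also have "\<dots> = H (j # js) 1 s x"
      by (rule sum_axis)
    finally show "pd j (H js 1 s) x = H (j # js) 1 s x" .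
  qed
  have gDH: "gD js (\<lambda>x. H [] 1 s x) = H js 1 s" for js s
  proof (induction js)
    case Nil then show ?case by simp
  next
    case (Cons j js)
    have "gD (j # js) (\<lambda>x. H [] 1 s x) = pd j (gD js (\<lambda>x. H [] 1 s x))" by simp
    also have "\<dots> = pd j (H js 1 s)" using Cons by simp
    also have "\<dots> = H (j # js) 1 s" by (rule pdH)
    finally show ?case .
  qed
  have smH: "sm (\<lambda>x. H [] 1 s x)" for s
    unfolding sm_def
  proof (intro allI)
    fix "is" x
    show "gD is (\<lambda>x. H [] 1 s x) differentiable (at x)"
      using cls_H1_deriv[OF c, of "is" s x] unfolding gDH differentiable_def by blast
  qed
  have d: "\<forall>js m s x. ((\<lambda>s. H js (Suc m) s x) has_vector_derivative H js (Suc (Suc m)) s x) (at s)"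
    using c unfolding cls_def by blast
  have ct: "\<forall>js m. continuous_on UNIV (\<lambda>p. H js (Suc m) (fst p) (snd p))"
    using c unfolding cls_def by blast
  have g: "\<forall>js s. gD js (\<lambda>x. H [] 1 s x) = H js (Suc 0) s"
    using gDH by (simp only: One_nat_def) simp
  show ?thesis unfolding cls_def
    by (intro conjI allI d[rule_format] ct[rule_format] smH g[rule_format])
qed

lemma cls_shift:
  assumes c: "cls \<Gamma> H"
  shows "cls (\<lambda>s x. H [] a s x) (\<lambda>js m. H js (m + a))"
proof (induction a)
  case 0
  have g: "\<forall>js s. gD js (\<Gamma> s) = H js 0 s" using c unfolding cls_def by blast
  have "\<Gamma> s = H [] 0 s" for s using g[rule_format, of "[]" s] by simp
  then have "\<Gamma> = (\<lambda>s x. H [] 0 s x)" by (intro ext) simp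
  moreover have "(\<lambda>js m. H js (m + 0)) = H" by simp
  ultimately show ?case using c by (simp only:)
next
  case (Suc a)
  have e1: "(\<lambda>s x. H [] (1 + a) s x) = (\<lambda>s x. H [] (Suc a) s x)" by simp
  have e2: "(\<lambda>js m. H js (Suc m + a)) = (\<lambda>js m. H js (m + Suc a))" by simp
  from cls_next[OF Suc] show ?case by (simp only: e1 e2)
qed

lemma coch_eq: "cochain q c \<Longrightarrow> (\<And>i. i < q \<Longrightarrow> Xs i = Ys i) \<Longrightarrow> c Xs = c Ys"
  unfolding cochain_def by blast

lemma coch_lin:
  assumes "cochain q c" "\<And>l. l < q \<Longrightarrow> sm (Xs l)" "i < q" "sm Y" "sm Z"
  shows "c (Xs(i := (\<lambda>x. a *\<^sub>R Y x + b *\<^sub>R Z x))) = a * c (Xs(i := Y)) + b * c (Xs(i := Z))"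
proof -
  have "\<forall>Xs i Y Z a b. (\<forall>l<q. smooth_vf (Xs l)) \<and> i < q \<and> smooth_vf Y \<and> smooth_vf Z \<longrightarrow>
        c (Xs(i := (\<lambda>x. a *\<^sub>R Y x + b *\<^sub>R Z x))) = a * c (Xs(i := Y)) + b * c (Xs(i := Z))"
    using assms(1) unfolding cochain_def by blast
  then show ?thesis using assms(2-5) by (simp add: smooth_vf_sm)
qed

lemma coch_cont:
  assumes "cochain q c" "\<And>l. l < q \<Longrightarrow> sm (Xs l)" "\<And>l m. l < q \<Longrightarrow> sm (Ys m l)"
    "\<And>l. l < q \<Longrightarrow> vf_conv (\<lambda>m. Ys m l) (Xs l)"
  shows "(\<lambda>m. c (Ys m)) \<longlonglongrightarrow> c Xs"
proof -
  have "\<forall>Ys Xs. (\<forall>l<q. smooth_vf (Xs l) \<and> (\<forall>m. smooth_vf (Ys m l)) \<and> vf_conv (\<lambda>m. Ys m l) (Xs l)) \<longrightarrow>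
        (\<lambda>m. c (Ys m)) \<longlonglongrightarrow> c Xs"
    using assms(1) unfolding cochain_def by blast
  then show ?thesis using assms(2-4) by (simp add: smooth_vf_sm)
qed

lemma coch_scale:
  assumes c: "cochain q c" and sm: "\<And>i. i < q \<Longrightarrow> sm (Xs i)"
  shows "c (\<lambda>i x. a i *\<^sub>R Xs i x) = (\<Prod>i<q. a i) * c Xs"
proof -
  define Ys where "Ys m = (\<lambda>i. if i < m then (\<lambda>x. a i *\<^sub>R Xs i x) else Xs i)" for m
  have smY: "sm (Ys m l)" if "l < q" for m l
    using sm[OF that] by (simp add: Ys_def sm_scaleR)
  have "m \<le> q \<Longrightarrow> c (Ys m) = (\<Prod>i<m. a i) * c Xs" for m
  proof (induction m)
    case 0
    have "Ys 0 = Xs" by (simp add: Ys_def)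
    then show ?case by simp
  next
    case (Suc m)
    then have m: "m < q" by simp
    have e1: "(Ys m)(m := (\<lambda>x. a m *\<^sub>R Xs m x + 0 *\<^sub>R Xs m x)) = Ys (Suc m)"
      by (rule ext) (simp add: Ys_def)
    have e2: "(Ys m)(m := Xs m) = Ys m"
      by (rule ext) (simp add: Ys_def)
    have smYm: "\<And>l. l < q \<Longrightarrow> sm (Ys m l)" by (rule smY)
    have "c (Ys (Suc m)) = a m * c (Ys m)"
      using coch_lin[where Xs="Ys m" and i=m and Y="Xs m" and Z="Xs m" and a="a m" and b=0, OF c smYm m sm[OF m] sm[OF m]] e1 e2 by simp
    then show ?case using Suc by simp
  qed
  then have "c (Ys q) = (\<Prod>i<q. a i) * c Xs" by simp
  moreover have "c (\<lambda>i x. a i *\<^sub>R Xs i x) = c (Ys q)"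
    by (rule coch_eq[OF c]) (simp add: Ys_def)
  ultimately show ?thesis by simp
qed

lemma vf_conv_const: "vf_conv (\<lambda>m. A) A"
  unfolding vf_conv_def by (simp add: uniform_limit_const)

lemma cls_sm: "cls \<Gamma> H \<Longrightarrow> sm (\<Gamma> s)"
  unfolding cls_def by blast

lemma cls_sm1: "cls \<Gamma> H \<Longrightarrow> sm (\<lambda>x. H [] 1 s x)"
  using cls_sm[OF cls_next] by blast

lemma cls_dq_conv:
  fixes \<Gamma> :: "real \<Rightarrow> real^'n::finite \<Rightarrow> real^'n"
  assumes c: "cls \<Gamma> H" and h: "h \<longlonglongrightarrow> 0" "\<And>m. h m \<noteq> 0"
  shows "vf_conv (\<lambda>m x. (1 / h m) *\<^sub>R \<Gamma> (s + h m) x + (- 1 / h m) *\<^sub>R \<Gamma> s x) (\<lambda>x. H [] 1 s x)"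
  unfolding vf_conv_gD
proof (intro allI impI)
  fix js :: "'n list" and K :: "(real^'n) set" assume K: "compact K"
  have g: "gD js (\<lambda>x. H [] 1 s x) = H js 1 s"
    using cls_next[OF c] unfolding cls_def One_nat_def by blast
  show "uniform_limit K (\<lambda>m. gD js (\<lambda>x. (1 / h m) *\<^sub>R \<Gamma> (s + h m) x + (- 1 / h m) *\<^sub>R \<Gamma> s x)) (gD js (\<lambda>x. H [] 1 s x)) sequentially"
    unfolding g by (rule cls_dq_unif[OF c h K])
qed

lemma coch_deriv:
  fixes \<Gamma> :: "nat \<Rightarrow> real \<Rightarrow> real^'n::finite \<Rightarrow> real^'n"
    and H :: "nat \<Rightarrow> 'n list \<Rightarrow> nat \<Rightarrow> real \<Rightarrow> real^'n \<Rightarrow> real^'n"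
  assumes c: "cochain q c" and cl: "\<And>i. i < q \<Longrightarrow> cls (\<Gamma> i) (H i)"
  shows "((\<lambda>t. c (\<lambda>i. \<Gamma> i t)) has_real_derivative (\<Sum>j<q. c ((\<lambda>i. \<Gamma> i t)(j := (\<lambda>x. H j [] 1 t x))))) (at t)"
proof -
  define Z where "Z j s = (\<lambda>i. if i < j then \<Gamma> i (t + s) else \<Gamma> i t)" for j s
  define Q where "Q j s = (\<lambda>x. (1 / s) *\<^sub>R \<Gamma> j (t + s) x + (- 1 / s) *\<^sub>R \<Gamma> j t x)" for j s
  have smZ: "\<And>l. l < q \<Longrightarrow> sm (Z j s l)" for j s using cls_sm[OF cl] by (simp add: Z_def)
  have step: "c ((Z j s)(j := Q j s)) = (1/s) * (c (Z (Suc j) s) - c (Z j s))" if j: "j < q" for j s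
  proof -
    have "c ((Z j s)(j := Q j s)) = (1/s) * c ((Z j s)(j := \<Gamma> j (t + s))) + (-1/s) * c ((Z j s)(j := \<Gamma> j t))"
      unfolding Q_def
      by (rule coch_lin[where Xs="Z j s" and i=j and Y="\<Gamma> j (t + s)" and Z="\<Gamma> j t" and a="1/s" and b="-1/s",
            OF c smZ j cls_sm[OF cl[OF j]] cls_sm[OF cl[OF j]]])
    moreover have "(Z j s)(j := \<Gamma> j (t + s)) = Z (Suc j) s" by (rule ext) (auto simp: Z_def)
    moreover have "(Z j s)(j := \<Gamma> j t) = Z j s" by (rule ext) (auto simp: Z_def)
    ultimately show ?thesis by (simp add: algebra_simps)
  qed
  have quot: "(\<Sum>j<q. c ((Z j s)(j := Q j s))) = (1/s) * (c (\<lambda>i. \<Gamma> i (t + s)) - c (\<lambda>i. \<Gamma> i t))" for s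
  proof -
    have "(\<Sum>j<q. c ((Z j s)(j := Q j s))) = (\<Sum>j<q. (1/s) * (c (Z (Suc j) s) - c (Z j s)))"
      using step by (intro sum.cong) auto
    also have "\<dots> = (1/s) * (c (Z q s) - c (Z 0 s))"
      by (simp only: sum_distrib_left[symmetric] sum_lessThan_telescope[of "\<lambda>j. c (Z j s)"])
    also have "c (Z q s) = c (\<lambda>i. \<Gamma> i (t + s))" by (rule coch_eq[OF c]) (simp add: Z_def)
    also have "Z 0 s = (\<lambda>i. \<Gamma> i t)" by (simp add: Z_def)
    finally show ?thesis .
  qed
  show ?thesis
    unfolding has_field_derivative_iff tendsto_at_iff_sequentially
  proof (intro allI impI)
    fix X :: "nat \<Rightarrow> real" assume X: "\<forall>i. X i \<in> UNIV - {t}" "X \<longlonglongrightarrow> t"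
    define h where "h m = X m - t" for m
    have h: "h \<longlonglongrightarrow> 0" unfolding h_def using tendsto_diff[OF X(2) tendsto_const[of t]] by simp
    have hnz: "\<And>m. h m \<noteq> 0" using X(1) by (auto simp: h_def)
    have Xh: "X m = t + h m" for m by (simp add: h_def)
    have e: "((\<lambda>y. (c (\<lambda>i. \<Gamma> i y) - c (\<lambda>i. \<Gamma> i t)) / (y - t)) \<circ> X) = (\<lambda>m. \<Sum>j<q. c ((Z j (h m))(j := Q j (h m))))"
      by (rule ext) (simp only: o_def Xh quot, simp)
    have "(\<lambda>m. \<Sum>j<q. c ((Z j (h m))(j := Q j (h m)))) \<longlonglongrightarrow> (\<Sum>j<q. c ((\<lambda>i. \<Gamma> i t)(j := (\<lambda>x. H j [] 1 t x))))"
    proof (rule tendsto_sum)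
      fix j assume "j \<in> {..<q}" then have j: "j < q" by simp
      show "(\<lambda>m. c ((Z j (h m))(j := Q j (h m)))) \<longlonglongrightarrow> c ((\<lambda>i. \<Gamma> i t)(j := (\<lambda>x. H j [] 1 t x)))"
      proof (rule coch_cont[OF c])
        fix l assume l: "l < q"
        show "sm (((\<lambda>i. \<Gamma> i t)(j := (\<lambda>x. H j [] 1 t x))) l)"
          using cls_sm[OF cl[OF l]] cls_sm1[OF cl[OF j]] by simp
        fix m
        show "sm (((Z j (h m))(j := Q j (h m))) l)"
        proof -
          have "sm (Q j (h m))" unfolding Q_def by (rule sm_lincomb[OF cls_sm[OF cl[OF j]] cls_sm[OF cl[OF j]]])
          then show ?thesis using smZ[OF l] by (cases "l = j") simp_all
        qed
      next
        fix l assume l: "l < q"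
        show "vf_conv (\<lambda>m. ((Z j (h m))(j := Q j (h m))) l) (((\<lambda>i. \<Gamma> i t)(j := (\<lambda>x. H j [] 1 t x))) l)"
        proof (cases "l = j")
          case True
          then show ?thesis unfolding Q_def using cls_dq_conv[OF cl[OF j] h hnz] by simp
        next
          case False
          show ?thesis
          proof (cases "l < j")
            case True
            then show ?thesis using False cls_conv[OF cl[OF l] h] by (simp add: Z_def)
          next
            case False2: False
            then show ?thesis using False vf_conv_const by (simp add: Z_def)
          qed
        qed
      qed
    qed
    then show "((\<lambda>y. (c (\<lambda>i. \<Gamma> i y) - c (\<lambda>i. \<Gamma> i t)) / (y - t)) \<circ> X) \<longlonglongrightarrow> (\<Sum>j<q. c ((\<lambda>i. \<Gamma> i t)(j := (\<lambda>x. H j [] 1 t x))))"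
      by (simp only: e)
  qed
qed

fun Psi :: "((nat \<Rightarrow> real^'n::finite \<Rightarrow> real^'n) \<Rightarrow> real) \<Rightarrow> nat \<Rightarrow> (nat \<Rightarrow> 'n list \<Rightarrow> nat \<Rightarrow> real \<Rightarrow> real^'n \<Rightarrow> real^'n)
    \<Rightarrow> nat \<Rightarrow> (nat \<Rightarrow> nat) \<Rightarrow> real \<Rightarrow> real" where
  "Psi c q H 0 a t = c (\<lambda>i x. H i [] (a i) t x)"
| "Psi c q H (Suc m) a t = (\<Sum>j<q. Psi c q H m (a(j := Suc (a j))) t)"

lemma Psi_deriv:
  assumes c: "cochain q c" and cl: "\<And>i. i < q \<Longrightarrow> cls (\<Gamma> i) (H i)"
  shows "(Psi c q H m a has_real_derivative Psi c q H (Suc m) a t) (at t)"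
proof (induction m arbitrary: a)
  case 0
  have cl': "cls (\<lambda>s x. H i [] (a i) s x) (\<lambda>js m. H i js (m + a i))" if "i < q" for i
    by (rule cls_shift[OF cl[OF that]])
  have d: "((\<lambda>t. c (\<lambda>i x. H i [] (a i) t x)) has_real_derivative
      (\<Sum>j<q. c ((\<lambda>i x. H i [] (a i) t x)(j := (\<lambda>x. H j [] (1 + a j) t x))))) (at t)"
    using coch_deriv[where \<Gamma>="\<lambda>i s x. H i [] (a i) s x" and H="\<lambda>i js m. H i js (m + a i)", OF c cl'] by simp
  have e: "(\<lambda>i x. H i [] (a i) t x)(j := (\<lambda>x. H j [] (1 + a j) t x)) = (\<lambda>i x. H i [] ((a(j := Suc (a j))) i) t x)" for j
    by (rule ext) simp
  have f: "Psi c q H 0 a = (\<lambda>t. c (\<lambda>i x. H i [] (a i) t x))" by (rule ext) simp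
  show ?case using d unfolding f e by simp
next
  case (Suc m)
  have f: "Psi c q H (Suc m) a = (\<lambda>t. \<Sum>j<q. Psi c q H m (a(j := Suc (a j))) t)" by (rule ext) simp
  show ?case unfolding f
    by (simp only: Psi.simps(2)[of c q H "Suc m"]) (rule DERIV_sum, rule Suc.IH)
qed

definition pw :: "nat \<Rightarrow> nat \<Rightarrow> real \<Rightarrow> real" where
  "pw p l s = (\<Prod>r<l. real (p - r)) * s ^ (p - l)"

lemma pw_deriv: "(pw p l has_real_derivative pw p (Suc l) s) (at s)"
proof -
  have "((\<lambda>s. (\<Prod>r<l. real (p - r)) * s ^ (p - l)) has_real_derivative
      (\<Prod>r<l. real (p - r)) * (real (p - l) * s ^ (p - l - Suc 0))) (at s)"
    by (intro DERIV_cmult DERIV_pow)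
  moreover have "(\<Prod>r<l. real (p - r)) * (real (p - l) * s ^ (p - l - Suc 0)) = pw p (Suc l) s"
    by (simp add: pw_def)
  moreover have "pw p l = (\<lambda>s. (\<Prod>r<l. real (p - r)) * s ^ (p - l))"
    by (rule ext) (simp add: pw_def)
  ultimately show ?thesis by simp
qed

lemma pw_cont: "continuous_on UNIV (pw p l)"
  unfolding pw_def by (intro continuous_intros)

lemma pw_0: "pw p 0 s = s ^ p"
  by (simp add: pw_def)

lemma pw_p0: "pw 0 l s = (if l = 0 then 1 else 0)"
proof (cases "l = 0")
  case False
  then have "(\<Prod>r<l. real (0 - r)) = 0" by (intro prod_zero) auto
  then show ?thesis using False by (simp add: pw_def)
qed (simp add: pw_def)

fun LB :: "(nat \<Rightarrow> real \<Rightarrow> real) \<Rightarrow> (nat \<Rightarrow> real \<Rightarrow> 'v::real_normed_vector) \<Rightarrow> nat \<Rightarrow> nat \<Rightarrow> nat \<Rightarrow> real \<Rightarrow> 'v" where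
  "LB a F 0 i j s = a i s *\<^sub>R F j s"
| "LB a F (Suc m) i j s = LB a F m (Suc i) j s + LB a F m i (Suc j) s"

lemma LB_deriv:
  assumes a: "\<And>l s. (a l has_real_derivative a (Suc l) s) (at s)"
    and F: "\<And>l s. (F l has_vector_derivative F (Suc l) s) (at s)"
  shows "((\<lambda>s. LB a F m i j s) has_vector_derivative LB a F (Suc m) i j s) (at s)"
proof (induction m arbitrary: i j)
  case 0
  have "((\<lambda>s. a i s *\<^sub>R F j s) has_vector_derivative (a i s *\<^sub>R F (Suc j) s + a (Suc i) s *\<^sub>R F j s)) (at s)"
    by (rule has_vector_derivative_scaleR[OF a F])
  then show ?case by (simp add: add.commute)
next
  case (Suc m)
  show ?case using has_vector_derivative_add[OF Suc.IH[of "Suc i" j] Suc.IH[of i "Suc j"]] by simp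
qed

lemma LB_cont:
  fixes G :: "nat \<Rightarrow> real \<Rightarrow> 'x::topological_space \<Rightarrow> 'v::real_normed_vector"
  assumes a: "\<And>l. continuous_on UNIV (a l)" and G: "\<And>l. continuous_on UNIV (\<lambda>p. G l (fst p) (snd p))"
  shows "continuous_on UNIV (\<lambda>p. LB a (\<lambda>l s. G l s (snd p)) m i j (fst p))"
proof (induction m arbitrary: i j)
  case 0
  have "continuous_on UNIV (\<lambda>p::real \<times> 'x. a i (fst p))"
    by (rule continuous_on_compose2[OF a continuous_on_fst]) auto
  then show ?case by (simp, intro continuous_on_scaleR G)
next
  case (Suc m)
  then show ?case by (simp, intro continuous_on_add)
qed

lemma LB_p0:
  assumes "\<And>l s. a l s = (if l = 0 then 1 else 0)"
  shows "LB a F m i j s = (if i = 0 then F (j + m) s else 0)"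
  using assms by (induction m arbitrary: i j) auto

fun T :: "nat \<Rightarrow> 'n::finite list \<Rightarrow> (real^'n \<Rightarrow> real^'n) \<Rightarrow> real^'n \<Rightarrow> real^'n \<Rightarrow> real^'n" where
  "T 0 js X x y = gD js X y"
| "T (Suc m) js X x y = (\<Sum>i\<in>UNIV. (x$i) *\<^sub>R T m (i # js) X x y)"

lemma T_deriv:
  assumes X: "sm X"
  shows "((\<lambda>s. T m js X x (s *\<^sub>R x)) has_vector_derivative T (Suc m) js X x (s *\<^sub>R x)) (at s)"
proof (induction m arbitrary: js)
  case 0
  have d1: "((\<lambda>s. s *\<^sub>R x) has_derivative (\<lambda>u. u *\<^sub>R x)) (at s)"
    by (rule bounded_linear.has_derivative[OF bounded_linear_scaleR_left has_derivative_ident])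
  have d2: "(gD js X has_derivative (\<lambda>v. \<Sum>j\<in>UNIV. v$j *\<^sub>R pd j (gD js X) (s *\<^sub>R x))) (at (s *\<^sub>R x))"
    by (rule has_derivative_pd[OF sm_diffble[OF sm_gD[OF X]]])
  have "((gD js X \<circ> (\<lambda>s. s *\<^sub>R x)) has_derivative ((\<lambda>v. \<Sum>j\<in>UNIV. v$j *\<^sub>R pd j (gD js X) (s *\<^sub>R x)) \<circ> (\<lambda>u. u *\<^sub>R x))) (at s)"
    by (rule diff_chain_at[OF d1 d2])
  moreover have "((\<lambda>v. \<Sum>j\<in>UNIV. v$j *\<^sub>R pd j (gD js X) (s *\<^sub>R x)) \<circ> (\<lambda>u. u *\<^sub>R x))
      = (\<lambda>u. u *\<^sub>R T (Suc 0) js X x (s *\<^sub>R x))"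
    by (rule ext) (simp add: scaleR_sum_right)
  ultimately show ?case unfolding has_vector_derivative_def by (simp add: o_def)
next
  case (Suc m)
  have "((\<lambda>s. \<Sum>i\<in>UNIV. x$i *\<^sub>R T m (i # js) X x (s *\<^sub>R x)) has_vector_derivative
      (\<Sum>i\<in>UNIV. x$i *\<^sub>R T (Suc m) (i # js) X x (s *\<^sub>R x))) (at s)"
    by (intro has_vector_derivative_sum bounded_linear.has_vector_derivative[OF bounded_linear_scaleR_right] Suc.IH)
  then show ?case by simp
qed

lemma T_cont:
  assumes X: "sm X"
  shows "continuous_on UNIV (\<lambda>p::real \<times> (real^'n::finite). T m js X (snd p) (fst p *\<^sub>R snd p))"
proof (induction m arbitrary: js)
  case 0
  have c: "continuous_on UNIV (gD js X)"
    using sm_diffble[OF sm_gD[OF X]] by (intro differentiable_imp_continuous_on) (simp add: differentiable_on_def)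
  have "continuous_on UNIV (\<lambda>p::real \<times> (real^'n). gD js X (fst p *\<^sub>R snd p))"
    by (rule continuous_on_compose2[OF c]) (auto intro!: continuous_intros)
  then show ?case by simp
next
  case (Suc m)
  show ?case by (simp, intro continuous_intros Suc.IH)
qed

definition Hb :: "(real^'n::finite \<Rightarrow> real^'n) \<Rightarrow> 'n list \<Rightarrow> nat \<Rightarrow> real \<Rightarrow> real^'n \<Rightarrow> real^'n" where
  "Hb X js m s x = LB (pw (length js)) (\<lambda>l s. T l js X x (s *\<^sub>R x)) m 0 0 s"

lemma gD_comp_scale:
  assumes X: "sm X"
  shows "gD js (\<lambda>x. X (s *\<^sub>R x)) = (\<lambda>x. s ^ length js *\<^sub>R gD js X (s *\<^sub>R x))"
proof (induction js)
  case Nil then show ?case by simp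
next
  case (Cons j js)
  have *: "pd j (\<lambda>x. s ^ length js *\<^sub>R gD js X (s *\<^sub>R x)) y = s ^ length (j # js) *\<^sub>R pd j (gD js X) (s *\<^sub>R y)" for y
  proof -
    let ?F = "frechet_derivative (gD js X) (at (s *\<^sub>R y))"
    have d2: "(gD js X has_derivative ?F) (at (s *\<^sub>R y))"
      using sm_diffble[OF sm_gD[OF X]] frechet_derivative_works by blast
    have d1: "((\<lambda>x. s *\<^sub>R x) has_derivative (\<lambda>v. s *\<^sub>R v)) (at y)"
      by (rule bounded_linear.has_derivative[OF bounded_linear_scaleR_right has_derivative_ident])
    have "((gD js X \<circ> (\<lambda>x. s *\<^sub>R x)) has_derivative (?F \<circ> (\<lambda>v. s *\<^sub>R v))) (at y)"
      by (rule diff_chain_at[OF d1 d2])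
    then have "((\<lambda>x. s ^ length js *\<^sub>R gD js X (s *\<^sub>R x)) has_derivative (\<lambda>v. s ^ length js *\<^sub>R ?F (s *\<^sub>R v))) (at y)"
      using bounded_linear.has_derivative[OF bounded_linear_scaleR_right] unfolding o_def by blast
    then have "pd j (\<lambda>x. s ^ length js *\<^sub>R gD js X (s *\<^sub>R x)) y = s ^ length js *\<^sub>R ?F (s *\<^sub>R axis j 1)"
      by (rule pd_has)
    also have "?F (s *\<^sub>R axis j 1) = s *\<^sub>R ?F (axis j 1)"
      using d2 has_derivative_linear linear_scale by blast
    also have "?F (axis j 1) = pd j (gD js X) (s *\<^sub>R y)" by (simp add: pd_def)
    finally show ?thesis by simp
  qed
  show ?case unfolding gD.simps Cons.IH by (rule ext) (rule *)
qed

lemma sm_comp_scale: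
  fixes X :: "real^'n::finite \<Rightarrow> real^'n"
  assumes X: "sm X"
  shows "sm (\<lambda>x. X (s *\<^sub>R x))"
  unfolding sm_def
proof (intro allI)
  fix js :: "'n list" and x :: "real^'n"
  have c: "(\<lambda>x. s *\<^sub>R x) differentiable (at x)"
    by (rule bounded_linear_imp_differentiable[OF bounded_linear_scaleR_right])
  have dg: "gD js X differentiable (at (s *\<^sub>R x))" by (rule sm_diffble[OF sm_gD[OF X]])
  have "(gD js X \<circ> (\<lambda>x. s *\<^sub>R x)) differentiable (at x)"
    by (rule differentiable_chain_at[OF c dg])
  then have dgs: "(\<lambda>x. gD js X (s *\<^sub>R x)) differentiable (at x)" by (simp only: o_def)
  have dl: "(\<lambda>v. s ^ length js *\<^sub>R v) differentiable (at (gD js X (s *\<^sub>R x)))"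
    by (rule bounded_linear_imp_differentiable[OF bounded_linear_scaleR_right])
  have "((\<lambda>v. s ^ length js *\<^sub>R v) \<circ> (\<lambda>x. gD js X (s *\<^sub>R x))) differentiable (at x)"
    by (rule differentiable_chain_at[OF dgs dl])
  then have "(\<lambda>x. s ^ length js *\<^sub>R gD js X (s *\<^sub>R x)) differentiable (at x)" by (simp only: o_def)
  then show "gD js (\<lambda>x. X (s *\<^sub>R x)) differentiable (at x)" by (simp add: gD_comp_scale[OF X])
qed

lemma cls_base:
  assumes X: "sm X"
  shows "cls (\<lambda>s x. X (s *\<^sub>R x)) (Hb X)"
  unfolding cls_def
proof (intro conjI allI)
  fix s show "sm (\<lambda>x. X (s *\<^sub>R x))" by (rule sm_comp_scale[OF X])
next
  fix js s show "gD js (\<lambda>x. X (s *\<^sub>R x)) = Hb X js 0 s"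
    by (rule ext) (simp add: gD_comp_scale[OF X] Hb_def pw_0)
next
  fix js m s x
  show "((\<lambda>s. Hb X js m s x) has_vector_derivative Hb X js (Suc m) s x) (at s)"
    unfolding Hb_def
    by (rule LB_deriv[where a="pw (length js)" and F="\<lambda>l s. T l js X x (s *\<^sub>R x)"]) (rule pw_deriv, rule T_deriv[OF X])
next
  fix js m
  show "continuous_on UNIV (\<lambda>p. Hb X js m (fst p) (snd p))"
    unfolding Hb_def by (rule LB_cont[where G="\<lambda>l s x. T l js X x (s *\<^sub>R x)", OF pw_cont T_cont[OF X]])
qed

lemma Hb_nil: "Hb X [] a 0 x = T a [] X x 0"
  unfolding Hb_def by (subst LB_p0) (auto simp: pw_p0)

lemma pf_const: "poly_fun (\<lambda>x::real^'n::finite. c)"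
  unfolding poly_fun_def
  by (rule exI[of _ "{\<lambda>_. 0}"], rule exI[of _ "\<lambda>_. c"]) simp

lemma sum_restrict_sub:
  assumes "finite C" "A \<subseteq> C"
  shows "(\<Sum>\<alpha>\<in>C. if \<alpha> \<in> A then g \<alpha> else 0) = (\<Sum>\<alpha>\<in>A. g \<alpha>)"
proof -
  have "(\<Sum>\<alpha>\<in>C. if \<alpha> \<in> A then g \<alpha> else 0) = sum g (C \<inter> A)"
    by (rule sum.inter_restrict[OF assms(1), symmetric])
  also have "C \<inter> A = A" using assms(2) by blast
  finally show ?thesis .
qed

lemma pf_add:
  assumes "poly_fun f" "poly_fun g"
  shows "poly_fun (\<lambda>x. f x + g x)"
proof -
  obtain A a where A: "finite A" "f = (\<lambda>x. \<Sum>\<alpha>\<in>A. a \<alpha> * (\<Prod>i\<in>UNIV. (x $ i) ^ (\<alpha> i)))"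
    using assms(1) unfolding poly_fun_def by blast
  obtain B b where B: "finite B" "g = (\<lambda>x. \<Sum>\<alpha>\<in>B. b \<alpha> * (\<Prod>i\<in>UNIV. (x $ i) ^ (\<alpha> i)))"
    using assms(2) unfolding poly_fun_def by blast
  define C where "C = A \<union> B"
  define cc where "cc \<alpha> = (if \<alpha> \<in> A then a \<alpha> else 0) + (if \<alpha> \<in> B then b \<alpha> else 0)" for \<alpha>
  have fin: "finite C" using A B by (simp add: C_def)
  have "f x + g x = (\<Sum>\<alpha>\<in>C. cc \<alpha> * (\<Prod>i\<in>UNIV. (x $ i) ^ (\<alpha> i)))" for x
  proof -
    have "(\<Sum>\<alpha>\<in>C. cc \<alpha> * (\<Prod>i\<in>UNIV. (x $ i) ^ (\<alpha> i))) =
        (\<Sum>\<alpha>\<in>C. if \<alpha> \<in> A then a \<alpha> * (\<Prod>i\<in>UNIV. (x $ i) ^ (\<alpha> i)) else 0) +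
        (\<Sum>\<alpha>\<in>C. if \<alpha> \<in> B then b \<alpha> * (\<Prod>i\<in>UNIV. (x $ i) ^ (\<alpha> i)) else 0)"
      unfolding sum.distrib[symmetric] by (rule sum.cong) (auto simp: cc_def distrib_right)
    also have "\<dots> = f x + g x"
      using A B fin by (simp add: sum_restrict_sub C_def)
    finally show ?thesis by simp
  qed
  then show ?thesis unfolding poly_fun_def using fin by blast
qed

lemma pf_sum: "finite S \<Longrightarrow> (\<And>s. s \<in> S \<Longrightarrow> poly_fun (f s)) \<Longrightarrow> poly_fun (\<lambda>x. \<Sum>s\<in>S. f s x)"
proof (induction S rule: finite_induct)
  case empty then show ?case using pf_const[of 0] by simp
next
  case (insert s S)
  then show ?case using pf_add[of "f s" "\<lambda>x. \<Sum>s\<in>S. f s x"] by simp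
qed

lemma pf_coord:
  assumes "poly_fun (f :: real^'n::finite \<Rightarrow> real)"
  shows "poly_fun (\<lambda>x. x $ i * f x)"
proof -
  obtain A a where A: "finite A" "f = (\<lambda>x. \<Sum>\<alpha>\<in>A. a \<alpha> * (\<Prod>i\<in>UNIV. (x $ i) ^ (\<alpha> i)))"
    using assms unfolding poly_fun_def by blast
  define sh :: "('n \<Rightarrow> nat) \<Rightarrow> ('n \<Rightarrow> nat)" where "sh \<alpha> = \<alpha>(i := Suc (\<alpha> i))" for \<alpha>
  define a' where "a' \<beta> = a (\<beta>(i := \<beta> i - 1))" for \<beta>
  have inj: "inj_on sh A"
  proof (rule inj_onI)
    fix \<alpha> \<alpha>' assume "sh \<alpha> = sh \<alpha>'"
    then have "(sh \<alpha>)(i := \<alpha> i) = (sh \<alpha>')(i := \<alpha>' i)"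
      by (metis diff_Suc_1 fun_upd_same sh_def)
    then show "\<alpha> = \<alpha>'" by (simp add: sh_def)
  qed
  have a': "a' (sh \<alpha>) = a \<alpha>" for \<alpha> by (simp add: a'_def sh_def)
  have mono: "(\<Prod>k\<in>UNIV. (x $ k) ^ (sh \<alpha> k)) = x $ i * (\<Prod>k\<in>UNIV. (x $ k) ^ (\<alpha> k))" for x \<alpha>
  proof -
    have "(\<Prod>k\<in>UNIV. (x $ k) ^ (sh \<alpha> k)) = (\<Prod>k\<in>UNIV. (if k = i then x $ i else 1) * (x $ k) ^ (\<alpha> k))"
      by (rule prod.cong) (auto simp: sh_def)
    also have "\<dots> = (\<Prod>k\<in>UNIV. if k = i then x $ i else 1) * (\<Prod>k\<in>UNIV. (x $ k) ^ (\<alpha> k))"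
      by (rule prod.distrib)
    also have "(\<Prod>k\<in>UNIV. if k = i then x $ i else 1) = x $ i" by simp
    finally show ?thesis .
  qed
  have "x $ i * f x = (\<Sum>\<beta>\<in>sh ` A. a' \<beta> * (\<Prod>k\<in>UNIV. (x $ k) ^ (\<beta> k)))" for x
  proof -
    have "(\<Sum>\<beta>\<in>sh ` A. a' \<beta> * (\<Prod>k\<in>UNIV. (x $ k) ^ (\<beta> k))) = (\<Sum>\<alpha>\<in>A. a' (sh \<alpha>) * (\<Prod>k\<in>UNIV. (x $ k) ^ (sh \<alpha> k)))"
      by (rule sum.reindex[OF inj, unfolded o_def])
    also have "\<dots> = (\<Sum>\<alpha>\<in>A. x $ i * (a \<alpha> * (\<Prod>k\<in>UNIV. (x $ k) ^ (\<alpha> k))))"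
      by (rule sum.cong) (simp_all add: a' mono)
    also have "\<dots> = x $ i * f x" by (simp add: A(2) sum_distrib_left)
    finally show ?thesis by simp
  qed
  then show ?thesis unfolding poly_fun_def using A(1) by blast
qed

lemma T_poly: "poly_fun (\<lambda>x. T m js X x y $ j)"
proof (induction m arbitrary: js)
  case 0 then show ?case by (simp add: pf_const)
next
  case (Suc m)
  have "poly_fun (\<lambda>x. \<Sum>i\<in>UNIV. x $ i * (T m (i # js) X x y $ j))"
    by (intro pf_sum pf_coord Suc.IH) simp
  then show ?case by simp
qed

lemma T_homog: "T m js X (t *\<^sub>R x) y = t ^ m *\<^sub>R T m js X x y"
proof (induction m arbitrary: js)
  case 0 then show ?case by simp
next
  case (Suc m)
  have "T (Suc m) js X (t *\<^sub>R x) y = (\<Sum>i\<in>UNIV. (t * x $ i) *\<^sub>R (t ^ m *\<^sub>R T m (i # js) X x y))"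
    by (simp add: Suc.IH)
  also have "\<dots> = t ^ Suc m *\<^sub>R T (Suc m) js X x y"
    by (simp add: scaleR_sum_right mult.commute mult.left_commute)
  finally show ?case .
qed

lemma T_poly_vf: "poly_vf (\<lambda>x. T m js X x y)"
  unfolding poly_vf_def using T_poly by blast

lemma T_homog_vf: "homog_vf (int m - 1) (\<lambda>x. T m js X x 0)"
  unfolding homog_vf_def
proof (intro allI impI)
  fix t :: real assume t: "t > 0"
  have "t powr (of_int (int m - 1)) = t ^ m / t"
    using t by (simp add: powr_diff powr_realpow)
  then show "pull_vf t (\<lambda>x. T m js X x 0) = (\<lambda>x. t powr (of_int (int m - 1)) *\<^sub>R T m js X x 0)"
    unfolding pull_vf_def by (simp add: T_homog divide_inverse mult.commute)
qed

lemma pf_sm: "poly_fun f \<Longrightarrow> sm f"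
proof -
  assume "poly_fun f"
  then obtain A a where A: "finite A" "f = (\<lambda>x. \<Sum>\<alpha>\<in>A. a \<alpha> * (\<Prod>i\<in>UNIV. (x $ i) ^ (\<alpha> i)))"
    unfolding poly_fun_def by blast
  have "sm (\<lambda>x. (x $ i) ^ n)" for i n
    by (rule sm_power[OF sm_linear[OF bounded_linear_vec_nth]])
  then have "sm (\<lambda>x. \<Prod>i\<in>UNIV. (x $ i) ^ (\<alpha> i))" for \<alpha>
    by (intro sm_prod) auto
  then have "sm (\<lambda>x. a \<alpha> * (\<Prod>i\<in>UNIV. (x $ i) ^ (\<alpha> i)))" for \<alpha>
    by (rule sm_bilin[OF bounded_bilinear_mult sm_const])
  then show "sm f" unfolding A(2) by (intro sm_sum A(1))
qed

lemma pv_sm: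
  fixes X :: "real^'n::finite \<Rightarrow> real^'n"
  assumes "poly_vf X" shows "sm X"
proof -
  have e: "X = (\<lambda>x. \<Sum>j\<in>UNIV. (X x $ j) *\<^sub>R (axis j 1 :: real^'n))"
    by (rule ext) (metis (no_types, lifting) basis_expansion scalar_mult_eq_scaleR sum.cong)
  have "sm (\<lambda>x. (X x $ j) *\<^sub>R (axis j 1 :: real^'n))" for j
    by (rule sm_bilin[OF bounded_bilinear_scaleR pf_sm sm_const]) (use assms in \<open>simp add: poly_vf_def\<close>)
  then show ?thesis by (subst e) (intro sm_sum, simp_all)
qed

lemma sum_upd_Suc:
  fixes a :: "nat \<Rightarrow> nat"
  assumes "j < q"
  shows "(\<Sum>i<q. (a(j := Suc (a j))) i) = Suc (\<Sum>i<q. a i)"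
proof -
  have "(\<Sum>i<q. (a(j := Suc (a j))) i) = (a(j := Suc (a j))) j + (\<Sum>i\<in>{..<q} - {j}. (a(j := Suc (a j))) i)"
    using assms by (intro sum.remove) auto
  also have "(\<Sum>i\<in>{..<q} - {j}. (a(j := Suc (a j))) i) = (\<Sum>i\<in>{..<q} - {j}. a i)"
    by (rule sum.cong) auto
  also have "(\<Sum>i<q. a i) = a j + (\<Sum>i\<in>{..<q} - {j}. a i)"
    using assms by (intro sum.remove) auto
  ultimately show ?thesis by simp
qed

lemma Psi_zero:
  assumes base: "\<And>a. int (\<Sum>i<q. a i) - int q < k \<Longrightarrow> c (\<lambda>i x. H i [] (a i) 0 x) = 0"
  shows "int m + int (\<Sum>i<q. a i) - int q < k \<Longrightarrow> Psi c q H m a 0 = 0"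
proof (induction m arbitrary: a)
  case 0 then show ?case using base by simp
next
  case (Suc m)
  have "Psi c q H m (a(j := Suc (a j))) 0 = 0" if j: "j < q" for j
  proof (rule Suc.IH)
    have s: "int (\<Sum>i<q. (a(j := Suc (a j))) i) = int (\<Sum>i<q. a i) + 1"
      by (simp only: sum_upd_Suc[OF j] of_nat_Suc)
    have p: "int m + 1 + int (\<Sum>i<q. a i) - int q < k" using Suc.prems by simp
    show "int m + int (\<Sum>i<q. (a(j := Suc (a j))) i) - int q < k" using s p by linarith
  qed
  then show ?case by simp
qed

lemma eventually_pos_right: "(\<And>t. t > 0 \<Longrightarrow> P t) \<Longrightarrow> \<forall>\<^sub>F t in at_right (0::real). P t"
  unfolding eventually_at_right_field by (intro exI[of _ 1]) auto

lemma cont_right: "isCont f (0::real) \<Longrightarrow> (f \<longlongrightarrow> f 0) (at_right 0)"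
  unfolding isCont_def using filterlim_at_split by blast

theorem lemma3p6:
  fixes c :: "(nat \<Rightarrow> real^'n::finite \<Rightarrow> real^'n) \<Rightarrow> real"
    and q :: nat and k :: int
  assumes "q > 0" and "cochain q c"
  shows "filt k q c \<longleftrightarrow>
    (\<forall>Xs (d :: nat \<Rightarrow> int).
       (\<forall>i<q. poly_vf (Xs i) \<and> homog_vf (d i) (Xs i)) \<and> (\<Sum>i<q. d i) < k
       \<longrightarrow> c Xs = 0)"
proof (intro iffI allI impI)
  assume F: "filt k q c"
  fix Xs :: "nat \<Rightarrow> real^'n \<Rightarrow> real^'n" and d :: "nat \<Rightarrow> int"
  assume Hy: "(\<forall>i<q. poly_vf (Xs i) \<and> homog_vf (d i) (Xs i)) \<and> (\<Sum>i<q. d i) < k"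
  have smX: "\<And>i. i < q \<Longrightarrow> sm (Xs i)" using Hy pv_sm by blast
  have "\<forall>Xs. (\<forall>i<q. smooth_vf (Xs i)) \<longrightarrow> (\<exists>L. ((\<lambda>t. t powr (- of_int k) * pull_cochain t c Xs) \<longlongrightarrow> L) (at_right 0))"
    using F unfolding filt_def by blast
  moreover have "\<forall>i<q. smooth_vf (Xs i)" using smX by (simp add: smooth_vf_sm)
  ultimately obtain L where L: "((\<lambda>t. t powr (- of_int k) * pull_cochain t c Xs) \<longlongrightarrow> L) (at_right 0)"
    by blast
  define D where "D = (\<Sum>i<q. d i)"
  define e :: real where "e = of_int D - of_int k"
  have "D < k" using Hy by (simp add: D_def)
  then have e: "e < 0" unfolding e_def by simp
  have ev: "t powr (- of_int k) * pull_cochain t c Xs = t powr e * c Xs" if t: "t > 0" for t :: real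
  proof -
    have "pull_cochain t c Xs = c (\<lambda>i. pull_vf t (Xs i))" by (simp add: pull_cochain_def)
    also have "\<dots> = c (\<lambda>i x. (t powr of_int (d i)) *\<^sub>R Xs i x)"
    proof (rule coch_eq[OF assms(2)])
      fix i assume "i < q"
      then have "homog_vf (d i) (Xs i)" using Hy by blast
      then show "pull_vf t (Xs i) = (\<lambda>x. (t powr of_int (d i)) *\<^sub>R Xs i x)"
        using t unfolding homog_vf_def by blast
    qed
    also have "\<dots> = (\<Prod>i<q. t powr of_int (d i)) * c Xs"
      by (rule coch_scale[OF assms(2) smX])
    also have "(\<Prod>i<q. t powr of_int (d i)) = t powr (of_int D)"
      using t by (simp add: D_def powr_sum)
    finally have "pull_cochain t c Xs = t powr (of_int D) * c Xs" .
    then show ?thesis by (simp add: e_def powr_diff powr_minus divide_inverse mult.commute)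
  qed
  have lim0: "((\<lambda>t::real. t powr (- e)) \<longlongrightarrow> 0) (at_right 0)"
  proof (rule tendsto_zero_powrI)
    show "((\<lambda>t::real. t) \<longlongrightarrow> 0) (at_right 0)" by (rule tendsto_ident_at)
    show "((\<lambda>t::real. - e) \<longlongrightarrow> - e) (at_right 0)" by (rule tendsto_const)
    show "\<forall>\<^sub>F t in at_right 0. 0 \<le> (t::real)" by (rule eventually_pos_right) simp
    show "0 < - e" using e by simp
  qed
  have "((\<lambda>t. t powr (- e) * (t powr (- of_int k) * pull_cochain t c Xs)) \<longlongrightarrow> 0 * L) (at_right 0)"
    by (rule tendsto_mult[OF lim0 L])
  moreover have "\<forall>\<^sub>F t in at_right 0. t powr (- e) * (t powr (- of_int k) * pull_cochain t c Xs) = c Xs"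
  proof (rule eventually_pos_right)
    fix t :: real assume t: "t > 0"
    have "t powr (- e) * t powr e = 1" using t by (simp add: powr_minus)
    then show "t powr (- e) * (t powr (- of_int k) * pull_cochain t c Xs) = c Xs"
      using ev[OF t] by (simp add: mult.assoc[symmetric])
  qed
  ultimately have "((\<lambda>t. c Xs) \<longlongrightarrow> 0 * L) (at_right (0::real))"
    by (rule Lim_transform_eventually)
  then have "((\<lambda>t. c Xs) \<longlongrightarrow> 0) (at_right (0::real))" by simp
  then show "c Xs = 0"
    using tendsto_unique[OF trivial_limit_at_right_real tendsto_const] by blast
next
  assume V: "\<forall>Xs (d :: nat \<Rightarrow> int).
       (\<forall>i<q. poly_vf (Xs i) \<and> homog_vf (d i) (Xs i)) \<and> (\<Sum>i<q. d i) < k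
       \<longrightarrow> c Xs = 0"
  show "filt k q c" unfolding filt_def
  proof (intro conjI allI impI)
    show "cochain q c" by (rule assms(2))
    fix Xs :: "nat \<Rightarrow> real^'n \<Rightarrow> real^'n" assume "\<forall>i<q. smooth_vf (Xs i)"
    then have smX: "\<And>i. i < q \<Longrightarrow> sm (Xs i)" by (simp add: smooth_vf_sm)
    define H where "H i = Hb (Xs i)" for i
    have cl: "\<And>i. i < q \<Longrightarrow> cls (\<lambda>s x. Xs i (s *\<^sub>R x)) (H i)"
      unfolding H_def by (rule cls_base[OF smX])
    define P where "P m = Psi c q H m (\<lambda>_. 0)" for m
    have der: "(P m has_real_derivative P (Suc m) t) (at t)" for m t
      unfolding P_def by (rule Psi_deriv[OF assms(2) cl])
    have cont: "isCont (P m) t" for m t by (rule DERIV_isCont[OF der])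
    have hb0: "Hb X [] 0 t = (\<lambda>x. X (t *\<^sub>R x))" for X :: "real^'n \<Rightarrow> real^'n" and t
      by (rule ext) (simp add: Hb_def pw_0)
    have P0: "P 0 t = c (\<lambda>i x. Xs i (t *\<^sub>R x))" for t
      unfolding P_def by (simp add: H_def hb0)
    have vanish: "P m 0 = 0" if m: "int m < k + int q" for m
      unfolding P_def
    proof (rule Psi_zero)
      fix a :: "nat \<Rightarrow> nat" assume a: "int (\<Sum>i<q. a i) - int q < k"
      have Hn: "(\<lambda>x. H i [] (a i) 0 x) = (\<lambda>x. T (a i) [] (Xs i) x 0)" for i
        by (simp add: H_def Hb_nil)
      show "c (\<lambda>i x. H i [] (a i) 0 x) = 0"
      proof (rule V[rule_format, of "\<lambda>i x. H i [] (a i) 0 x" "\<lambda>i. int (a i) - 1"], intro conjI allI impI)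
        fix i assume "i < q"
        show "poly_vf (\<lambda>x. H i [] (a i) 0 x)" unfolding Hn by (rule T_poly_vf)
        show "homog_vf (int (a i) - 1) (\<lambda>x. H i [] (a i) 0 x)" unfolding Hn by (rule T_homog_vf)
      next
        have "(\<Sum>i<q. int (a i) - 1) = int (\<Sum>i<q. a i) - int q"
          by (simp add: sum_subtractf)
        then show "(\<Sum>i<q. int (a i) - 1) < k" using a by simp
      qed
    next
      show "int m + int (\<Sum>i<q. (\<lambda>_. 0) i) - int q < k" using m by simp
    qed
    have pull: "t powr (- of_int k) * pull_cochain t c Xs = t powr (- of_int k) * (1/t)^q * P 0 t" if t: "t > 0" for t :: real
    proof -
      have "pull_cochain t c Xs = c (\<lambda>i x. (1/t) *\<^sub>R Xs i (t *\<^sub>R x))"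
        by (simp add: pull_cochain_def pull_vf_def)
      also have "\<dots> = (\<Prod>i<q. 1/t) * c (\<lambda>i x. Xs i (t *\<^sub>R x))"
        by (rule coch_scale[OF assms(2), where Xs="\<lambda>i x. Xs i (t *\<^sub>R x)" and a="\<lambda>_. 1/t"])
          (rule sm_comp_scale[OF smX])
      finally show ?thesis by (simp add: P0)
    qed
    show "\<exists>L. ((\<lambda>t. t powr (- of_int k) * pull_cochain t c Xs) \<longlongrightarrow> L) (at_right 0)"
    proof (cases "k + int q \<le> 0")
      case True
      define e where "e = nat (- (k + int q))"
      have fac: "t powr (- of_int k) * (1/t)^q = t ^ e" if t: "t > 0" for t :: real
      proof -
        have "t ^ e = t powr (real e)" using t by (simp add: powr_realpow)
        also have "real e = - of_int k + (- real q)" using True by (simp add: e_def)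
        also have "t powr (- of_int k + (- real q)) = t powr (- of_int k) * t powr (- real q)"
          by (rule powr_add)
        also have "t powr (- real q) = (1/t)^q"
          using t by (simp add: powr_minus powr_realpow power_one_over inverse_eq_divide)
        finally show ?thesis by simp
      qed
      have l1: "((\<lambda>t::real. t ^ e) \<longlongrightarrow> 0 ^ e) (at_right 0)"
        by (rule tendsto_power[OF tendsto_ident_at])
      have "((\<lambda>t. t ^ e * P 0 t) \<longlongrightarrow> 0 ^ e * P 0 0) (at_right 0)"
        by (rule tendsto_mult[OF l1 cont_right[OF cont]])
      moreover have "\<forall>\<^sub>F t in at_right 0. t ^ e * P 0 t = t powr (- of_int k) * pull_cochain t c Xs"
        by (rule eventually_pos_right) (simp add: pull fac)
      ultimately have "((\<lambda>t. t powr (- of_int k) * pull_cochain t c Xs) \<longlongrightarrow> 0 ^ e * P 0 0) (at_right 0)"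
        by (rule Lim_transform_eventually)
      then show ?thesis by (rule exI)
    next
      case False
      define M where "M = nat (k + int q)"
      have M: "M > 0" "int M = k + int q" using False by (auto simp: M_def)
      have fac: "t powr (- of_int k) * (1/t)^q = 1 / t ^ M" if t: "t > 0" for t :: real
      proof -
        have "t ^ M = t powr (real M)" using t by (simp add: powr_realpow)
        also have "real M = of_int k + real q" using M by linarith
        also have "t powr (of_int k + real q) = t powr (of_int k) * t ^ q"
          using t by (simp add: powr_add powr_realpow)
        finally have tM: "t ^ M = t powr (of_int k) * t ^ q" .
        have "t powr (- of_int k) = 1 / t powr (of_int k)" by (simp add: powr_minus inverse_eq_divide)
        then show ?thesis by (simp add: tM power_one_over)
      qed
      have val: "\<exists>\<xi>. 0 < \<xi> \<and> \<xi> < t \<and> t powr (- of_int k) * pull_cochain t c Xs = P M \<xi> / fact M" if t: "t > 0" for t :: real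
      proof -
        obtain \<xi> where \<xi>: "0 < \<xi>" "\<xi> < t"
          and eq: "P 0 t = (\<Sum>m<M. P m 0 / fact m * t ^ m) + P M \<xi> / fact M * t ^ M"
          using Maclaurin[OF t M(1), of P "P 0"] der by blast
        have "(\<Sum>m<M. P m 0 / fact m * t ^ m) = 0"
          using M by (intro sum.neutral) (auto simp: vanish)
        then have "P 0 t = P M \<xi> / fact M * t ^ M" using eq by simp
        then have "t powr (- of_int k) * pull_cochain t c Xs = P M \<xi> / fact M"
          using t by (simp add: pull fac)
        then show ?thesis using \<xi> by blast
      qed
      have "((\<lambda>t. t powr (- of_int k) * pull_cochain t c Xs) \<longlongrightarrow> P M 0 / fact M) (at_right 0)"
        unfolding tendsto_iff
      proof (intro allI impI)
        fix \<epsilon> :: real assume \<epsilon>: "\<epsilon> > 0"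
        have "P M \<midarrow>0\<rightarrow> P M 0" using cont[where m=M and t=0] by (simp add: isCont_def)
        from LIM_D[OF this \<epsilon>] obtain \<delta> where \<delta>: "\<delta> > 0"
          and d: "\<forall>y. y \<noteq> 0 \<and> norm (y - 0) < \<delta> \<longrightarrow> norm (P M y - P M 0) < \<epsilon>" by blast
        show "\<forall>\<^sub>F t in at_right 0. dist (t powr (- of_int k) * pull_cochain t c Xs) (P M 0 / fact M) < \<epsilon>"
          unfolding eventually_at_right_field
        proof (intro exI[of _ \<delta>] conjI allI impI)
          show "\<delta> > 0" by (rule \<delta>)
          fix t :: real assume t: "t > 0" "t < \<delta>"
          obtain \<xi> where \<xi>: "0 < \<xi>" "\<xi> < t" and v: "t powr (- of_int k) * pull_cochain t c Xs = P M \<xi> / fact M"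
            using val[OF t(1)] by blast
          have n: "\<bar>P M \<xi> - P M 0\<bar> < \<epsilon>" using d \<xi> t by simp
          have f1: "(1::real) \<le> fact M" by simp
          have "dist (P M \<xi> / fact M) (P M 0 / fact M) = \<bar>P M \<xi> - P M 0\<bar> / fact M"
            by (simp add: dist_real_def diff_divide_distrib[symmetric])
          also have "\<dots> \<le> \<bar>P M \<xi> - P M 0\<bar>" using f1 by (simp add: divide_le_eq mult_le_cancel_left1)
          finally show "dist (t powr (- of_int k) * pull_cochain t c Xs) (P M 0 / fact M) < \<epsilon>"
            using v n by simp
        qed
      qed
      then show ?thesis by (rule exI)
    qed
  qed
qed

end
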